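(* Let $\omega\in\Omega$, $x,y\in X$, $z\in\mathbb C\setminus\sigma_\omega$ and $r\ge0$. Then $$G_{\omega,r}(x,y;z)=G_{\omega,0}(x,y;z)-\sum_{s=\max(1,d(x,y))}^{r}p_sN_{s-1}\,g_{\omega,s-1}(x;z)\,g_{\omega,s}(y;z),$$ where an empty sum is zero.
   Context: $(X,\mathbf P,\mathbf n)$ is a hierarchical structure: $X$ infinite countable, $\mathbf n=(n_r)_{r\ge0}$ positive integers, $\mathcal P_r$ partitions of $X$ ("clusters of rank $r$") with $n_0=1$ and rank-0 clusters singletons, every rank-$r$ cluster ($r\ge1$) a disjoint union of exactly $n_r$ rank-$(r-1)$ clusters, and any two points in a common cluster of some rank. $N_r=\prod_{s=0}^rn_s$, $Q_r(x)$ is the rank-$r$ cluster containing $x$, $d(x,y)=\min\{r:y\in Q_r(x)\}$, $(E_r\psi)(x)=\frac1{N_r}\sum_{d(x,y)\le r}\psi(y)$; $(p_r)_{r\ge1}$ positive with $\sum p_r=1$, $p_0=0$. For $\omega\in\mathbb R^X$, $V_\omega$ is multiplication by $\omega(x)$, and $H_{\omega,r}=V_\omega+\sum_{s=0}^rp_sE_s$ (so $H_{\omega,0}=V_\omega$). For each rank-$r$ cluster $Q$, $\ell^2(Q)=\{\psi:\psi=0\text{ off }Q\}$ is invariant under $H_{\omega,r}$; let $\sigma(\omega,Q)$ be the (finite) set of eigenvalues of $H_{\omega,r}$ restricted to $\ell^2(Q)$, and $\sigma_\omega=\bigcup\sigma(\omega,Q)$ over all clusters $Q$ of all ranks $r$.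 For $z\notin\sigma_\omega$, $G_{\omega,r}(x,y;z)=\langle\delta_x,(H_{\omega,r}\!\upharpoonright_{\ell^2(Q_r(x))}-z)^{-1}\delta_y\rangle$ if $d(x,y)\le r$ and $0$ otherwise (this is the matrix element $\langle\delta_x,(H_{\omega,r}-z)^{-1}\delta_y\rangle$), and $g_{\omega,r}(t;z)=\frac1{N_r}\sum_{d(t',t)\le r}G_{\omega,r}(t',t;z)$. *)

theory Defs
  imports Complex_Main "HOL-Library.Countable_Set"
begin

text \<open>Hierarchical structure. Q r x is the rank-r cluster containing x.\<close>
definition hier_struct :: "(nat \<Rightarrow> 'x \<Rightarrow> 'x set) \<Rightarrow> (nat \<Rightarrow> nat) \<Rightarrow> bool" where
  "hier_struct Q n \<longleftrightarrow>
     infinite (UNIV :: 'x set) \<and> countable (UNIV :: 'x set) \<and>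
     n 0 = 1 \<and> (\<forall>r. 0 < n r) \<and>
     (\<forall>x. Q 0 x = {x}) \<and>
     (\<forall>r x. x \<in> Q r x) \<and>
     (\<forall>r x y. y \<in> Q r x \<longrightarrow> Q r y = Q r x) \<and>
     (\<forall>r x. Q r x \<subseteq> Q (Suc r) x) \<and>
     (\<forall>r x. Q (Suc r) x = (\<Union>y\<in>Q (Suc r) x. Q r y)) \<and>
     (\<forall>r x. card (Q r ` Q (Suc r) x) = n (Suc r)) \<and>
     (\<forall>x y. \<exists>r. y \<in> Q r x)"

definition NN :: "(nat \<Rightarrow> nat) \<Rightarrow> nat \<Rightarrow> nat" where
  "NN n r = (\<Prod>s\<le>r. n s)"

definition hdist :: "(nat \<Rightarrow> 'x \<Rightarrow> 'x set) \<Rightarrow> 'x \<Rightarrow> 'x \<Rightarrow> nat" where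
  "hdist Q x y = (LEAST r. y \<in> Q r x)"

definition Eop :: "(nat \<Rightarrow> 'x \<Rightarrow> 'x set) \<Rightarrow> (nat \<Rightarrow> nat) \<Rightarrow> nat \<Rightarrow> ('x \<Rightarrow> complex) \<Rightarrow> 'x \<Rightarrow> complex" where
  "Eop Q n r \<psi> x = (1 / of_nat (NN n r)) * (\<Sum>y\<in>{y. hdist Q x y \<le> r}. \<psi> y)"

definition Hop :: "(nat \<Rightarrow> 'x \<Rightarrow> 'x set) \<Rightarrow> (nat \<Rightarrow> nat) \<Rightarrow> (nat \<Rightarrow> real) \<Rightarrow> ('x \<Rightarrow> real)
      \<Rightarrow> nat \<Rightarrow> ('x \<Rightarrow> complex) \<Rightarrow> 'x \<Rightarrow> complex" where
  "Hop Q n p \<omega> r \<psi> x = of_real (\<omega> x) * \<psi> x + (\<Sum>s\<le>r. of_real (p s) * Eop Q n s \<psi> x)"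

definition is_eig_restr :: "(nat \<Rightarrow> 'x \<Rightarrow> 'x set) \<Rightarrow> (nat \<Rightarrow> nat) \<Rightarrow> (nat \<Rightarrow> real) \<Rightarrow> ('x \<Rightarrow> real)
      \<Rightarrow> nat \<Rightarrow> 'x set \<Rightarrow> complex \<Rightarrow> bool" where
  "is_eig_restr Q n p \<omega> r C z \<longleftrightarrow>
     (\<exists>\<psi>. (\<forall>t. t \<notin> C \<longrightarrow> \<psi> t = 0) \<and> (\<exists>t. \<psi> t \<noteq> 0) \<and>
          (\<forall>t\<in>C. Hop Q n p \<omega> r \<psi> t = z * \<psi> t))"

definition sigma :: "(nat \<Rightarrow> 'x \<Rightarrow> 'x set) \<Rightarrow> (nat \<Rightarrow> nat) \<Rightarrow> (nat \<Rightarrow> real) \<Rightarrow> ('x \<Rightarrow> real) \<Rightarrow> complex set" where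
  "sigma Q n p \<omega> = {z. \<exists>r x. is_eig_restr Q n p \<omega> r (Q r x) z}"

text \<open>Green function: (H_{omega,r} restricted to l^2(Q_r(x)) - z)^{-1} delta_y evaluated at x,
  i.e. the value at x of the unique phi supported on Q_r(x) with (H - z) phi = delta_y on Q_r(x).\<close>
definition Green :: "(nat \<Rightarrow> 'x \<Rightarrow> 'x set) \<Rightarrow> (nat \<Rightarrow> nat) \<Rightarrow> (nat \<Rightarrow> real) \<Rightarrow> ('x \<Rightarrow> real)
      \<Rightarrow> nat \<Rightarrow> 'x \<Rightarrow> 'x \<Rightarrow> complex \<Rightarrow> complex" where
  "Green Q n p \<omega> r x y z =
     (if hdist Q x y \<le> r then
        (THE \<phi>. (\<forall>t. t \<notin> Q r x \<longrightarrow> \<phi> t = 0) \<and>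
               (\<forall>t\<in>Q r x. Hop Q n p \<omega> r \<phi> t - z * \<phi> t = (if t = y then 1 else 0))) x
      else 0)"

definition gfun :: "(nat \<Rightarrow> 'x \<Rightarrow> 'x set) \<Rightarrow> (nat \<Rightarrow> nat) \<Rightarrow> (nat \<Rightarrow> real) \<Rightarrow> ('x \<Rightarrow> real)
      \<Rightarrow> nat \<Rightarrow> 'x \<Rightarrow> complex \<Rightarrow> complex" where
  "gfun Q n p \<omega> r t z = (1 / of_nat (NN n r)) * (\<Sum>t'\<in>{t'. hdist Q t' t \<le> r}. Green Q n p \<omega> r t' t z)"

end

theory Submission imports Defs "HOL-Library.Function_Algebras" begin

context
  fixes Q :: "nat \<Rightarrow> 'x \<Rightarrow> 'x set" and n :: "nat \<Rightarrow> nat"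
  assumes HS: "hier_struct Q n"
begin

lemma H0: "\<forall>x. Q 0 x = {x}" using HS unfolding hier_struct_def by (elim conjE) assumption
lemma H1: "\<forall>r x. x \<in> Q r x" using HS unfolding hier_struct_def by (elim conjE) assumption
lemma H2: "\<forall>r x y. y \<in> Q r x \<longrightarrow> Q r y = Q r x" using HS unfolding hier_struct_def by (elim conjE) assumption
lemma H3: "\<forall>r x. Q r x \<subseteq> Q (Suc r) x" using HS unfolding hier_struct_def by (elim conjE) assumption
lemma H4: "\<forall>r x. Q (Suc r) x = (\<Union>y\<in>Q (Suc r) x. Q r y)" using HS unfolding hier_struct_def by (elim conjE) assumption
lemma H5: "\<forall>r x. card (Q r ` Q (Suc r) x) = n (Suc r)" using HS unfolding hier_struct_def by (elim conjE) assumption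
lemma H6: "\<forall>x y. \<exists>r. y \<in> Q r x" using HS unfolding hier_struct_def by (elim conjE) assumption
lemma H7: "\<forall>r. 0 < n r" using HS unfolding hier_struct_def by (elim conjE) assumption
lemma H8: "n 0 = 1" using HS unfolding hier_struct_def by (elim conjE) assumption

lemma Qself: "x \<in> Q r x" using H1 by blast
lemma Qeq: "y \<in> Q r x \<Longrightarrow> Q r y = Q r x" using H2 by blast
lemma Qsym: "y \<in> Q r x \<longleftrightarrow> x \<in> Q r y" by (metis Qeq Qself)
lemma QSuc: "Q r x \<subseteq> Q (Suc r) x" using H3 by blast
lemma Qmono: "r \<le> s \<Longrightarrow> Q r x \<subseteq> Q s x"
proof (induction s)
  case 0 then show ?case by simp
next
  case (Suc s) then show ?case using QSuc[of s x] by (auto simp: le_Suc_eq)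
qed
lemma Qex: "\<exists>r. y \<in> Q r x" using H6 by blast
lemma hdist_le: "hdist Q x y \<le> r \<longleftrightarrow> y \<in> Q r x"
proof
  assume "hdist Q x y \<le> r"
  moreover have "y \<in> Q (hdist Q x y) x" unfolding hdist_def using Qex[of y x] by (rule LeastI_ex)
  ultimately show "y \<in> Q r x" using Qmono by blast
next
  assume "y \<in> Q r x" then show "hdist Q x y \<le> r" unfolding hdist_def by (rule Least_le)
qed
lemma ball1: "{y. hdist Q x y \<le> r} = Q r x" using hdist_le by blast
lemma ball2: "{t'. hdist Q t' t \<le> r} = Q r t" using hdist_le Qsym by blast
lemma Qfin: "finite (Q r x)"
proof (induction r arbitrary: x)
  case 0 then show ?case using H0 by simp
next
  case (Suc r)
  have e: "Q (Suc r) x = \<Union>(Q r ` Q (Suc r) x)" using H4 by blast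
  have "card (Q r ` Q (Suc r) x) = n (Suc r)" "0 < n (Suc r)" using H5 H7 by blast+
  then have "finite (Q r ` Q (Suc r) x)" using card_gt_0_iff by metis
  then have "finite (\<Union>(Q r ` Q (Suc r) x))" by (rule finite_Union) (auto simp: Suc.IH)
  then show ?case using e by simp
qed
lemma NNpos: "NN n r > 0"
proof -
  have "\<forall>r. 0 < n r" using H7 by blast
  then show ?thesis unfolding NN_def by (simp add: prod_pos)
qed
lemma Qsub: "t \<in> Q r x \<Longrightarrow> s \<le> r \<Longrightarrow> Q s t \<subseteq> Q r x" using Qmono Qeq by blast

end

lemma sum_fun_app: "(\<Sum>a\<in>A. F a) (x::'b) = (\<Sum>a\<in>A. F a x)"
  by (induct A rule: infinite_finite_induct) auto

lemma Hop_add: "Hop Q n p \<omega> r (\<phi> + \<psi>) t = Hop Q n p \<omega> r \<phi> t + Hop Q n p \<omega> r \<psi> t"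
  unfolding Hop_def Eop_def by (simp add: sum.distrib algebra_simps)
lemma Hop_add': "Hop Q n p \<omega> r (\<lambda>t. \<phi> t + \<psi> t) t = Hop Q n p \<omega> r \<phi> t + Hop Q n p \<omega> r \<psi> t"
  unfolding Hop_def Eop_def by (simp add: sum.distrib algebra_simps)
lemma Hop_diff: "Hop Q n p \<omega> r (\<lambda>t. \<phi> t - \<psi> t) t = Hop Q n p \<omega> r \<phi> t - Hop Q n p \<omega> r \<psi> t"
  unfolding Hop_def Eop_def by (simp add: sum_subtractf algebra_simps)
lemma Hop_scale: "Hop Q n p \<omega> r (\<lambda>t. c * \<phi> t) t = c * Hop Q n p \<omega> r \<phi> t"
  unfolding Hop_def Eop_def by (simp add: sum_distrib_left algebra_simps)

definition solP :: "(nat \<Rightarrow> 'x \<Rightarrow> 'x set) \<Rightarrow> (nat \<Rightarrow> nat) \<Rightarrow> (nat \<Rightarrow> real) \<Rightarrow> ('x \<Rightarrow> real)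
      \<Rightarrow> complex \<Rightarrow> nat \<Rightarrow> 'x set \<Rightarrow> ('x \<Rightarrow> complex) \<Rightarrow> ('x \<Rightarrow> complex) \<Rightarrow> bool" where
  "solP Q n p \<omega> z r C f \<phi> \<longleftrightarrow> (\<forall>t. t \<notin> C \<longrightarrow> \<phi> t = 0) \<and> (\<forall>t\<in>C. Hop Q n p \<omega> r \<phi> t - z * \<phi> t = f t)"

context
  fixes Q :: "nat \<Rightarrow> 'x \<Rightarrow> 'x set" and n :: "nat \<Rightarrow> nat" and p :: "nat \<Rightarrow> real"
    and \<omega> :: "'x \<Rightarrow> real" and z :: complex
  assumes HS: "hier_struct Q n" and ZS: "z \<notin> sigma Q n p \<omega>"
begin

lemma noeig:
  assumes "\<forall>t. t \<notin> Q r x \<longrightarrow> \<psi> t = 0" "\<forall>t\<in>Q r x. Hop Q n p \<omega> r \<psi> t - z * \<psi> t = 0"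
  shows "\<psi> t = 0"
proof (rule ccontr)
  assume "\<psi> t \<noteq> 0"
  then have "is_eig_restr Q n p \<omega> r (Q r x) z" unfolding is_eig_restr_def using assms by auto
  then have "z \<in> sigma Q n p \<omega>" unfolding sigma_def by blast
  then show False using ZS by blast
qed

lemma uniq:
  assumes "solP Q n p \<omega> z r (Q r x) f \<phi>1" "solP Q n p \<omega> z r (Q r x) f \<phi>2"
  shows "\<phi>1 = \<phi>2"
proof
  fix t
  have "(\<lambda>t. \<phi>1 t - \<phi>2 t) t = 0"
  proof (rule noeig)
    show "\<forall>t. t \<notin> Q r x \<longrightarrow> \<phi>1 t - \<phi>2 t = 0" using assms unfolding solP_def by auto
    show "\<forall>t\<in>Q r x. Hop Q n p \<omega> r (\<lambda>t. \<phi>1 t - \<phi>2 t) t - z * (\<phi>1 t - \<phi>2 t) = 0"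
      using assms unfolding solP_def by (auto simp: Hop_diff algebra_simps)
  qed
  then show "\<phi>1 t = \<phi>2 t" by simp
qed

lemma exist: "\<exists>\<phi>. solP Q n p \<omega> z r (Q r x) f \<phi>"
proof -
  define C where "C = Q r x"
  have finC: "finite C" unfolding C_def using Qfin[OF HS] .
  define sc :: "complex \<Rightarrow> ('x\<Rightarrow>complex) \<Rightarrow> ('x\<Rightarrow>complex)" where "sc = (\<lambda>c \<phi> t. c * \<phi> t)"
  interpret V: vector_space sc by unfold_locales (auto simp: sc_def fun_eq_iff algebra_simps)
  define L where "L = (\<lambda>\<phi> t. if t \<in> C then Hop Q n p \<omega> r \<phi> t - z * \<phi> t else 0)"
  interpret L: Vector_Spaces.linear sc sc L
    by unfold_locales (auto simp: L_def sc_def fun_eq_iff Hop_add Hop_scale algebra_simps)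
  define S :: "('x \<Rightarrow> complex) set" where "S = {\<phi>. \<forall>t. t \<notin> C \<longrightarrow> \<phi> t = 0}"
  define \<delta> :: "'x \<Rightarrow> 'x \<Rightarrow> complex" where "\<delta> = (\<lambda>u t. if t = u then 1 else 0)"
  define B where "B = \<delta> ` C"
  have injd: "inj_on \<delta> C" unfolding inj_on_def \<delta>_def by (metis zero_neq_one)
  have BS: "B \<subseteq> S" unfolding B_def S_def \<delta>_def by auto
  have subS: "V.subspace S" unfolding V.subspace_def by (auto simp: S_def sc_def)
  have spanB: "V.span B = S"
  proof
    show "V.span B \<subseteq> S" by (rule V.span_minimal[OF BS subS])
    show "S \<subseteq> V.span B"
    proof
      fix \<phi> assume "\<phi> \<in> S"
      have "\<phi> = (\<Sum>u\<in>C. sc (\<phi> u) (\<delta> u))"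
      proof
        fix t
        have "(\<Sum>u\<in>C. sc (\<phi> u) (\<delta> u)) t = (\<Sum>u\<in>C. \<phi> u * (if t = u then 1 else 0))"
          unfolding sum_fun_app sc_def \<delta>_def by simp
        also have "\<dots> = (if t \<in> C then \<phi> t else 0)"
          using finC by (simp add: if_distrib[of "\<lambda>x. _ * x"] sum.delta cong: if_cong)
        also have "\<dots> = \<phi> t" using \<open>\<phi> \<in> S\<close> unfolding S_def by auto
        finally show "\<phi> t = (\<Sum>u\<in>C. sc (\<phi> u) (\<delta> u)) t" by simp
      qed
      also have "\<dots> \<in> V.span B"
        by (rule V.span_sum, rule V.span_scale, rule V.span_base) (auto simp: B_def)
      finally show "\<phi> \<in> V.span B" .
    qed
  qed
  have indB: "V.independent B"
  proof
    assume "V.dependent B"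
    then obtain u where u: "\<exists>v\<in>B. u v \<noteq> 0" "(\<Sum>v\<in>B. sc (u v) v) = 0"
      using V.dependent_finite[of B] finC unfolding B_def by auto
    then obtain t where t: "t \<in> C" "u (\<delta> t) \<noteq> 0" unfolding B_def by auto
    have "0 = (\<Sum>v\<in>B. sc (u v) v) t" using u by simp
    also have "\<dots> = (\<Sum>w\<in>C. u (\<delta> w) * \<delta> w t)"
      unfolding sum_fun_app sc_def B_def by (simp add: sum.reindex[OF injd])
    also have "\<dots> = u (\<delta> t)"
      using finC t by (simp add: \<delta>_def if_distrib[of "\<lambda>x. _ * x"] sum.delta' cong: if_cong)
    finally show False using t by simp
  qed
  have injL: "inj_on L S"
  proof
    fix \<phi>1 \<phi>2 assume a: "\<phi>1 \<in> S" "\<phi>2 \<in> S" "L \<phi>1 = L \<phi>2"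
    show "\<phi>1 = \<phi>2"
    proof
      fix t
      have "(\<lambda>t. \<phi>1 t - \<phi>2 t) t = 0"
      proof (rule noeig)
        show "\<forall>t. t \<notin> Q r x \<longrightarrow> \<phi>1 t - \<phi>2 t = 0" using a unfolding S_def C_def by auto
        show "\<forall>t\<in>Q r x. Hop Q n p \<omega> r (\<lambda>t. \<phi>1 t - \<phi>2 t) t - z * (\<phi>1 t - \<phi>2 t) = 0"
        proof
          fix t assume "t \<in> Q r x"
          then have "L \<phi>1 t = L \<phi>2 t" using a by simp
          then show "Hop Q n p \<omega> r (\<lambda>t. \<phi>1 t - \<phi>2 t) t - z * (\<phi>1 t - \<phi>2 t) = 0"
            using \<open>t \<in> Q r x\<close> unfolding L_def C_def by (auto simp: Hop_diff algebra_simps)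
        qed
      qed
      then show "\<phi>1 t = \<phi>2 t" by simp
    qed
  qed
  have indLB: "V.independent (L ` B)"
    by (rule L.independent_injective_image[OF indB]) (simp add: spanB injL)
  have cardLB: "card (L ` B) = card B" using injL BS by (meson card_image inj_on_subset)
  have LS: "L ` S \<subseteq> S" unfolding L_def S_def by auto
  have finB: "finite B" unfolding B_def using finC by simp
  have LBsub: "L ` B \<subseteq> V.span B" using LS BS spanB by auto
  have "V.span B \<subseteq> V.span (L ` B)"
  proof
    fix a assume aB: "a \<in> V.span B"
    show "a \<in> V.span (L ` B)"
    proof (rule ccontr)
      assume na: "a \<notin> V.span (L ` B)"
      then have i2: "V.independent (insert a (L ` B))" using indLB by (rule V.independent_insertI)
      have "insert a (L ` B) \<subseteq> V.span B" using aB LBsub by auto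
      then have "card (insert a (L ` B)) \<le> card B" using V.independent_span_bound[OF finB i2] by simp
      moreover have "a \<notin> L ` B" using na V.span_base by blast
      ultimately show False using cardLB finB by simp
    qed
  qed
  then have "S \<subseteq> L ` S" using L.span_image[of B] spanB by simp
  moreover have "(\<lambda>t. if t \<in> C then f t else 0) \<in> S" unfolding S_def by auto
  ultimately have "(\<lambda>t. if t \<in> C then f t else 0) \<in> L ` S" by (rule subsetD)
  then obtain \<phi> where ph: "\<phi> \<in> S" and Lph: "(\<lambda>t. if t \<in> C then f t else 0) = L \<phi>" by (rule imageE)
  have "solP Q n p \<omega> z r C f \<phi>" unfolding solP_def
  proof (intro conjI allI impI ballI)
    fix t assume "t \<notin> C" then show "\<phi> t = 0" using ph unfolding S_def by simp
  next
    fix t assume tC: "t \<in> C"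
    have "(\<lambda>t. if t \<in> C then f t else 0) t = L \<phi> t" using fun_cong[OF Lph, of t] by simp
    then show "Hop Q n p \<omega> r \<phi> t - z * \<phi> t = f t" using tC unfolding L_def by simp
  qed
  then show ?thesis unfolding C_def by blast
qed


lemma sol_spec: "solP Q n p \<omega> z r (Q r x) f (THE \<phi>. solP Q n p \<omega> z r (Q r x) f \<phi>)"
proof -
  have "\<exists>!\<phi>. solP Q n p \<omega> z r (Q r x) f \<phi>" using exist uniq by blast
  then show ?thesis by (rule theI')
qed

lemma Green_eq: "Green Q n p \<omega> r a b z = (if b \<in> Q r a then
   (THE \<phi>. solP Q n p \<omega> z r (Q r a) (\<lambda>t. if t = b then 1 else 0) \<phi>) a else 0)"
  unfolding Green_def solP_def hdist_le[OF HS] by simp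

lemma sum_delta_l: "finite C \<Longrightarrow> a \<in> C \<Longrightarrow> (\<Sum>t\<in>C. (if t = a then 1 else 0) * g t) = (g a :: complex)"
proof -
  assume "finite C" "a \<in> C"
  have "(\<Sum>t\<in>C. (if t = a then 1 else 0) * g t) = (\<Sum>t\<in>C. if t = a then g t else 0)" by (rule sum.cong) auto
  then show ?thesis using \<open>finite C\<close> \<open>a \<in> C\<close> by simp
qed
lemma sum_delta_r: "finite C \<Longrightarrow> a \<in> C \<Longrightarrow> (\<Sum>t\<in>C. g t * (if t = a then 1 else 0)) = (g a :: complex)"
proof -
  assume "finite C" "a \<in> C"
  have "(\<Sum>t\<in>C. g t * (if t = a then 1 else 0)) = (\<Sum>t\<in>C. if t = a then g t else 0)" by (rule sum.cong) auto
  then show ?thesis using \<open>finite C\<close> \<open>a \<in> C\<close> by simp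
qed

lemma Eop_at: "Eop Q n s \<eta> t = 1 / of_nat (NN n s) * (\<Sum>u\<in>Q s t. \<eta> u)"
  unfolding Eop_def ball1[OF HS] ..

lemma Eop_pair:
  assumes "s \<le> r"
  shows "(\<Sum>t\<in>Q r x. Eop Q n s \<eta> t * \<phi> t) = (\<Sum>t\<in>Q r x. \<eta> t * Eop Q n s \<phi> t)"
proof -
  define C where "C = Q r x"
  have finC: "finite C" unfolding C_def using Qfin[OF HS] .
  have ex: "(\<Sum>u\<in>Q s t. g u) = (\<Sum>u\<in>C. if u \<in> Q s t then g u else 0)" if "t \<in> C" for t and g :: "'x \<Rightarrow> complex"
  proof -
    have "C \<inter> Q s t = Q s t" using Qsub[OF HS, of t r x s] that assms unfolding C_def by blast
    then show ?thesis using sum.inter_restrict[OF finC, of g "Q s t"] by simp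
  qed
  define c where "c = 1 / (of_nat (NN n s) :: complex)"
  have e1: "Eop Q n s \<eta> t * \<phi> t = c * (\<Sum>u\<in>C. if u \<in> Q s t then \<eta> u * \<phi> t else 0)" if "t \<in> C" for t
  proof -
    have "Eop Q n s \<eta> t * \<phi> t = c * (\<Sum>u\<in>Q s t. \<eta> u * \<phi> t)"
      by (simp add: Eop_at c_def sum_distrib_right)
    also have "\<dots> = c * (\<Sum>u\<in>C. if u \<in> Q s t then \<eta> u * \<phi> t else 0)"
      using ex[OF that, of "\<lambda>u. \<eta> u * \<phi> t"] by simp
    finally show ?thesis .
  qed
  have e2: "\<eta> t * Eop Q n s \<phi> t = c * (\<Sum>u\<in>C. if u \<in> Q s t then \<eta> t * \<phi> u else 0)" if "t \<in> C" for t
  proof -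
    have "\<eta> t * Eop Q n s \<phi> t = c * (\<Sum>u\<in>Q s t. \<eta> t * \<phi> u)"
      by (simp add: Eop_at c_def sum_distrib_left)
    also have "\<dots> = c * (\<Sum>u\<in>C. if u \<in> Q s t then \<eta> t * \<phi> u else 0)"
      using ex[OF that, of "\<lambda>u. \<eta> t * \<phi> u"] by simp
    finally show ?thesis .
  qed
  have "(\<Sum>t\<in>C. Eop Q n s \<eta> t * \<phi> t) = c * (\<Sum>t\<in>C. \<Sum>u\<in>C. if u \<in> Q s t then \<eta> u * \<phi> t else 0)"
    using e1 by (simp add: sum_distrib_left)
  also have "(\<Sum>t\<in>C. \<Sum>u\<in>C. if u \<in> Q s t then \<eta> u * \<phi> t else 0) = (\<Sum>t\<in>C. \<Sum>u\<in>C. if u \<in> Q s t then \<eta> t * \<phi> u else 0)"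
    by (subst sum.swap) (simp add: Qsym[OF HS])
  also have "c * \<dots> = (\<Sum>t\<in>C. \<eta> t * Eop Q n s \<phi> t)"
    using e2 by (simp add: sum_distrib_left)
  finally show ?thesis unfolding C_def .
qed

lemma Hop_pair0:
  assumes "k \<le> r"
  shows "(\<Sum>t\<in>Q r x. Hop Q n p \<omega> k \<eta> t * \<phi> t) = (\<Sum>t\<in>Q r x. \<eta> t * Hop Q n p \<omega> k \<phi> t)"
proof -
  define C where "C = Q r x"
  have "(\<Sum>t\<in>C. Hop Q n p \<omega> k \<eta> t * \<phi> t) =
      (\<Sum>t\<in>C. of_real (\<omega> t) * \<eta> t * \<phi> t) + (\<Sum>s\<le>k. of_real (p s) * (\<Sum>t\<in>C. Eop Q n s \<eta> t * \<phi> t))"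
    unfolding Hop_def by (simp add: algebra_simps sum.distrib sum_distrib_left sum_distrib_right sum.swap[of _ C])
  also have "\<dots> = (\<Sum>t\<in>C. of_real (\<omega> t) * \<eta> t * \<phi> t) + (\<Sum>s\<le>k. of_real (p s) * (\<Sum>t\<in>C. \<eta> t * Eop Q n s \<phi> t))"
    using Eop_pair[where r=r and x=x] assms unfolding C_def by simp
  also have "\<dots> = (\<Sum>t\<in>C. \<eta> t * Hop Q n p \<omega> k \<phi> t)"
    unfolding Hop_def by (simp add: algebra_simps sum.distrib sum_distrib_left sum_distrib_right sum.swap[of _ C])
  finally show ?thesis unfolding C_def .
qed

lemma Hop_pair:
  assumes "k \<le> r"
  shows "(\<Sum>t\<in>Q r x. (Hop Q n p \<omega> k \<eta> t - z * \<eta> t) * \<phi> t) = (\<Sum>t\<in>Q r x. \<eta> t * (Hop Q n p \<omega> k \<phi> t - z * \<phi> t))"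
  using Hop_pair0[OF assms, where x=x and \<eta>=\<eta> and \<phi>=\<phi>] by (simp add: algebra_simps sum_subtractf sum_distrib_left)


abbreviation "dl b \<equiv> (\<lambda>t. if t = b then (1::complex) else 0)"

lemma sol_same: "b \<in> Q r a \<Longrightarrow> solP Q n p \<omega> z r (Q r a) f (THE \<phi>. solP Q n p \<omega> z r (Q r b) f \<phi>)"
  using sol_spec[of r b f] Qeq[OF HS, of b r a] by simp

lemma Green_sym: "Green Q n p \<omega> r a b z = Green Q n p \<omega> r b a z"
proof (cases "b \<in> Q r a")
  case False
  then have "a \<notin> Q r b" using Qsym[OF HS] by blast
  then show ?thesis using False by (simp add: Green_eq)
next
  case True
  then have ab: "a \<in> Q r b" using Qsym[OF HS] by blast
  define C where "C = Q r a"
  have CB: "Q r b = C" unfolding C_def using Qeq[OF HS, OF True] .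
  define \<phi> where "\<phi> = (THE \<phi>. solP Q n p \<omega> z r (Q r a) (dl b) \<phi>)"
  define \<eta> where "\<eta> = (THE \<phi>. solP Q n p \<omega> z r (Q r b) (dl a) \<phi>)"
  have sp: "solP Q n p \<omega> z r C (dl b) \<phi>" unfolding \<phi>_def C_def by (rule sol_spec)
  have se: "solP Q n p \<omega> z r C (dl a) \<eta>" unfolding \<eta>_def using sol_spec[of r b "dl a"] CB by simp
  have finC: "finite C" unfolding C_def using Qfin[OF HS] .
  have aC: "a \<in> C" "b \<in> C" unfolding C_def using Qself[OF HS] True by auto
  have "\<phi> a = (\<Sum>t\<in>C. dl a t * \<phi> t)" using sum_delta_l[OF finC aC(1)] by simp
  also have "\<dots> = (\<Sum>t\<in>C. (Hop Q n p \<omega> r \<eta> t - z * \<eta> t) * \<phi> t)"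
    using se unfolding solP_def by (intro sum.cong) auto
  also have "\<dots> = (\<Sum>t\<in>C. \<eta> t * (Hop Q n p \<omega> r \<phi> t - z * \<phi> t))"
    unfolding C_def by (rule Hop_pair) simp
  also have "\<dots> = (\<Sum>t\<in>C. \<eta> t * dl b t)"
    using sp unfolding solP_def by (intro sum.cong) auto
  also have "\<dots> = \<eta> b" using sum_delta_r[OF finC aC(2)] by simp
  finally show ?thesis using True ab unfolding Green_eq \<phi>_def \<eta>_def by simp
qed

lemma gfun_eq:
  assumes "solP Q n p \<omega> z r (Q r y) (dl y) \<psi>"
  shows "gfun Q n p \<omega> r y z = 1 / of_nat (NN n r) * (\<Sum>t\<in>Q r y. \<psi> t)"
proof -
  have "Green Q n p \<omega> r t y z = \<psi> t" if "t \<in> Q r y" for t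
  proof -
    have yt: "y \<in> Q r t" using that Qsym[OF HS] by blast
    have "solP Q n p \<omega> z r (Q r y) (dl y) (THE \<phi>. solP Q n p \<omega> z r (Q r t) (dl y) \<phi>)"
      using sol_same[of t r y] that by simp
    then have "(THE \<phi>. solP Q n p \<omega> z r (Q r t) (dl y) \<phi>) = \<psi>" using uniq assms by blast
    then show ?thesis using yt by (simp add: Green_eq)
  qed
  then show ?thesis unfolding gfun_def ball2[OF HS] by simp
qed

lemma step:
  "Green Q n p \<omega> (Suc k) x y z = Green Q n p \<omega> k x y z -
     (if y \<in> Q (Suc k) x then of_real (p (Suc k)) * of_nat (NN n k) * gfun Q n p \<omega> k x z * gfun Q n p \<omega> (Suc k) y z else 0)"
proof (cases "y \<in> Q (Suc k) x")
  case False
  then have "y \<notin> Q k x" using QSuc[OF HS, of k x] by blast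
  then show ?thesis using False by (simp add: Green_eq)
next
  case True
  define C where "C = Q (Suc k) x"
  have finC: "finite C" unfolding C_def using Qfin[OF HS] .
  have xC: "x \<in> C" "y \<in> C" unfolding C_def using Qself[OF HS] True by auto
  have kC: "Q k x \<subseteq> C" unfolding C_def by (rule QSuc[OF HS])
  have CY: "Q (Suc k) y = C" unfolding C_def using Qeq[OF HS, OF True] .
  define \<psi> where "\<psi> = (THE \<phi>. solP Q n p \<omega> z (Suc k) C (dl y) \<phi>)"
  define \<eta> where "\<eta> = (THE \<phi>. solP Q n p \<omega> z k (Q k x) (dl x) \<phi>)"
  have sp: "solP Q n p \<omega> z (Suc k) C (dl y) \<psi>" unfolding \<psi>_def C_def by (rule sol_spec)
  have se: "solP Q n p \<omega> z k (Q k x) (dl x) \<eta>" unfolding \<eta>_def by (rule sol_spec)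
  define N' where "N' = (of_nat (NN n (Suc k)) :: complex)"
  define Nk where "Nk = (of_nat (NN n k) :: complex)"
  have Nk0: "Nk \<noteq> 0" unfolding Nk_def using NNpos[OF HS, of k] by simp
  define S where "S = (\<Sum>t\<in>C. \<psi> t)"
  have g1: "gfun Q n p \<omega> (Suc k) y z = 1 / N' * S"
    unfolding S_def N'_def CY[symmetric] by (rule gfun_eq) (use sp CY in simp)
  have g0: "gfun Q n p \<omega> k x z = 1 / Nk * (\<Sum>t\<in>Q k x. \<eta> t)"
    unfolding Nk_def by (rule gfun_eq) (rule se)
  have G1: "Green Q n p \<omega> (Suc k) x y z = \<psi> x"
    using True unfolding Green_eq \<psi>_def C_def by simp
  have G0: "Green Q n p \<omega> k x y z = \<eta> y"
  proof (cases "y \<in> Q k x")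
    case False
    then show ?thesis using se unfolding solP_def by (simp add: Green_eq)
  next
    case yk: True
    have "Green Q n p \<omega> k x y z = Green Q n p \<omega> k y x z" by (rule Green_sym)
    also have "\<dots> = (THE \<phi>. solP Q n p \<omega> z k (Q k y) (dl x) \<phi>) y"
      using yk Qsym[OF HS] by (simp add: Green_eq)
    also have "\<dots> = \<eta> y" unfolding \<eta>_def using Qeq[OF HS, OF yk] by simp
    finally show ?thesis .
  qed
  have eta_out: "\<eta> t = 0" if "t \<notin> Q k x" for t using se that unfolding solP_def by simp
  have eta_sol: "Hop Q n p \<omega> k \<eta> t - z * \<eta> t = dl x t" if "t \<in> C" for t
  proof (cases "t \<in> Q k x")
    case True then show ?thesis using se unfolding solP_def by simp
  next
    case False
    have "t \<noteq> x" using False Qself[OF HS, of x k] by auto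
    have E0: "Eop Q n s \<eta> t = 0" if "s \<le> k" for s
    proof -
      have "\<eta> u = 0" if "u \<in> Q s t" for u
      proof (rule eta_out)
        show "u \<notin> Q k x"
        proof
          assume "u \<in> Q k x"
          moreover have "u \<in> Q k t" using Qmono[OF HS, OF \<open>s \<le> k\<close>] \<open>u \<in> Q s t\<close> by blast
          ultimately have "t \<in> Q k x" using Qeq[OF HS] Qself[OF HS] by metis
          then show False using False by simp
        qed
      qed
      then show ?thesis unfolding Eop_at by simp
    qed
    then show ?thesis unfolding Hop_def using eta_out[OF False] \<open>t \<noteq> x\<close> by simp
  qed
  have psi_sol: "Hop Q n p \<omega> k \<psi> t - z * \<psi> t = dl y t - of_real (p (Suc k)) * (1 / N' * S)" if "t \<in> C" for t
  proof -
    have "Q (Suc k) t = C" unfolding C_def using Qeq[OF HS] that unfolding C_def by blast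
    then have "Eop Q n (Suc k) \<psi> t = 1 / N' * S" unfolding Eop_at N'_def S_def by simp
    moreover have "Hop Q n p \<omega> (Suc k) \<psi> t - z * \<psi> t = dl y t" using sp that unfolding solP_def by blast
    ultimately show ?thesis unfolding Hop_def by (simp add: algebra_simps)
  qed
  have "\<psi> x = (\<Sum>t\<in>C. dl x t * \<psi> t)" using sum_delta_l[OF finC xC(1)] by simp
  also have "\<dots> = (\<Sum>t\<in>C. (Hop Q n p \<omega> k \<eta> t - z * \<eta> t) * \<psi> t)"
    using eta_sol by (intro sum.cong) auto
  also have "\<dots> = (\<Sum>t\<in>C. \<eta> t * (Hop Q n p \<omega> k \<psi> t - z * \<psi> t))"
    unfolding C_def by (rule Hop_pair) simp
  also have "\<dots> = (\<Sum>t\<in>C. \<eta> t * dl y t) - of_real (p (Suc k)) * (1 / N' * S) * (\<Sum>t\<in>C. \<eta> t)"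
    using psi_sol
  proof -
    have "(\<Sum>t\<in>C. \<eta> t * (Hop Q n p \<omega> k \<psi> t - z * \<psi> t)) = (\<Sum>t\<in>C. \<eta> t * (dl y t - of_real (p (Suc k)) * (1 / N' * S)))"
      using psi_sol by (intro sum.cong) auto
    also have "\<dots> = (\<Sum>t\<in>C. \<eta> t * dl y t - of_real (p (Suc k)) * (1 / N' * S) * \<eta> t)"
      by (intro sum.cong) (auto simp: algebra_simps)
    also have "\<dots> = (\<Sum>t\<in>C. \<eta> t * dl y t) - of_real (p (Suc k)) * (1 / N' * S) * (\<Sum>t\<in>C. \<eta> t)"
      by (simp add: sum_subtractf sum_distrib_left)
    finally show ?thesis .
  qed
  also have "(\<Sum>t\<in>C. \<eta> t * dl y t) = \<eta> y" using sum_delta_r[OF finC xC(2)] by simp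
  also have "(\<Sum>t\<in>C. \<eta> t) = (\<Sum>t\<in>Q k x. \<eta> t)"
    using finC kC eta_out by (intro sum.mono_neutral_right) auto
  also have "\<dots> = Nk * gfun Q n p \<omega> k x z" using g0 Nk0 by simp
  finally show ?thesis using True G0 G1 g1 unfolding Nk_def by (simp add: algebra_simps)
qed

end

theorem proposition5:
  fixes Q :: "nat \<Rightarrow> 'x \<Rightarrow> 'x set" and n :: "nat \<Rightarrow> nat" and p :: "nat \<Rightarrow> real"
    and \<omega> :: "'x \<Rightarrow> real" and x y :: 'x and z :: complex and r :: nat
  assumes "hier_struct Q n"
    and "p 0 = 0" and "\<And>s. s \<ge> 1 \<Longrightarrow> p s > 0" and "p sums 1"
    and "z \<notin> sigma Q n p \<omega>"
  shows "Green Q n p \<omega> r x y z =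
           Green Q n p \<omega> 0 x y z
           - (\<Sum>s\<in>{max 1 (hdist Q x y)..r}.
                of_real (p s) * of_nat (NN n (s - 1)) * gfun Q n p \<omega> (s - 1) x z * gfun Q n p \<omega> s y z)"
proof (induction r)
  case 0
  then show ?case by simp
next
  case (Suc k)
  note st = step[OF assms(1) assms(5), where k=k and x=x and y=y]
  show ?case
  proof (cases "hdist Q x y \<le> Suc k")
    case True
    then have yin: "y \<in> Q (Suc k) x" using hdist_le[OF assms(1)] by blast
    have "{max 1 (hdist Q x y)..Suc k} = insert (Suc k) {max 1 (hdist Q x y)..k}"
      using True by (intro atLeastAtMostSuc_conv) simp
    then show ?thesis using st yin Suc.IH by simp
  next
    case False
    then have yin: "y \<notin> Q (Suc k) x" using hdist_le[OF assms(1)] by blast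
    have "{max 1 (hdist Q x y)..Suc k} = {}" "{max 1 (hdist Q x y)..k} = {}" using False by auto
    then show ?thesis using st yin Suc.IH by simp
  qed
qed

end
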